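(* Let $\ell\in\mathbb{N}$, $r\in\mathbb{N}_0$, and let $J_0,\dots,J_\ell,I_1,\dots,I_r\subseteq\mathbb{R}$ satisfy conditions (i)–(iv) of the definition of a connected CL-graph, with $G$ the intersection graph on $J_0,\dots,J_\ell,I_1,\dots,I_r$. For $0\le j\le\ell-1$ put $F_j=\{J_j,J_{j+1}\}\cup\{I_i: 1\le i\le r,\ j\in I_i\}$. Then the maximal cliques of $G$ are exactly $F_0,F_1,\dots,F_{\ell-1}$; in particular $c(G)=\ell$, and $\ell(G)=\ell$ (with $J_0,J_1,\dots,J_\ell$ forming an induced path of length $\ell$).
   Context: $c(G)$ is the number of maximal cliques of $G$; $\ell(G)$ is the length (number of edges) of a longest induced path of the connected graph $G$. Vertices of the intersection graph are identified with the sets defining them. Intersection graph: given a finite list of sets $S_1,\dots,S_m$, the intersection graph on this list has one vertex for each $S_i$ (distinct indices give distinct vertices), and the vertices corresponding to $S_i$ and $S_j$ ($i\neq j$) are adjacent iff $S_i\cap S_j\neq\emptyset$. Conditions defining a connected CL-graph, with $\mathbb{N}=\{1,2,\dots\}$, $\mathbb{N}_0=\{0,1,2,\dots\}$: (i) $J_0=\{0\}$ and $J_j=[j-1,j]$ for $1\le j\le \ell$; (ii) for each $1\le i\le r$ there is some $t\in\mathbb{N}$ with $I_i=[a_1,b_1]\cup[a_2,b_2]\cup\cdots\cup[a_t,b_t]$, where $a_1,\dots,a_t\in\mathbb{N}_0$, $b_1,\dots,b_t\in\mathbb{R}$, $a_1<b_1<a_2<b_2<\cdots<a_t<b_t<\ell$,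 and $a_{k+1}-b_k>2$ for all $1\le k\le t-1$; (iii) if $\{I_{i_1},\dots,I_{i_t}\}\subseteq\{I_1,\dots,I_r\}$ satisfies $I_{i_p}\cap I_{i_q}\neq\emptyset$ for all $1\le p<q\le t$, then $\bigcap_{k=1}^t I_{i_k}\neq\emptyset$; (iv) if $I_p\cap I_q\neq\emptyset$ and $j\in I_p\setminus I_q$ for some $j\in\mathbb{N}_0$, then ($j+1\notin I_p$ implies $j+1\notin I_q$) and ($j-1\notin I_p$ implies $j-1\notin I_q$). *)

theory Defs
  imports Complex_Main
begin

text \<open>Intersection graph on an indexed family of sets: vertices are indices (distinct
indices give distinct vertices), adjacency = distinct indices whose sets meet.\<close>
definition ig_adj :: "('v \<Rightarrow> 'a set) \<Rightarrow> 'v \<Rightarrow> 'v \<Rightarrow> bool" where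
  "ig_adj S u v \<longleftrightarrow> u \<noteq> v \<and> S u \<inter> S v \<noteq> {}"

definition is_clique :: "'v set \<Rightarrow> ('v \<Rightarrow> 'v \<Rightarrow> bool) \<Rightarrow> 'v set \<Rightarrow> bool" where
  "is_clique V E C \<longleftrightarrow> C \<subseteq> V \<and> (\<forall>u\<in>C. \<forall>v\<in>C. u \<noteq> v \<longrightarrow> E u v)"

definition is_maximal_clique :: "'v set \<Rightarrow> ('v \<Rightarrow> 'v \<Rightarrow> bool) \<Rightarrow> 'v set \<Rightarrow> bool" where
  "is_maximal_clique V E C \<longleftrightarrow> is_clique V E C \<and> (\<forall>D. is_clique V E D \<and> C \<subseteq> D \<longrightarrow> D = C)"

definition maximal_cliques :: "'v set \<Rightarrow> ('v \<Rightarrow> 'v \<Rightarrow> bool) \<Rightarrow> 'v set set" where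
  "maximal_cliques V E = {C. is_maximal_clique V E C}"

definition num_max_cliques :: "'v set \<Rightarrow> ('v \<Rightarrow> 'v \<Rightarrow> bool) \<Rightarrow> nat" where
  "num_max_cliques V E = card (maximal_cliques V E)"

definition induced_path :: "'v set \<Rightarrow> ('v \<Rightarrow> 'v \<Rightarrow> bool) \<Rightarrow> 'v list \<Rightarrow> bool" where
  "induced_path V E p \<longleftrightarrow> p \<noteq> [] \<and> distinct p \<and> set p \<subseteq> V \<and>
     (\<forall>i<length p. \<forall>j<length p. E (p!i) (p!j) \<longleftrightarrow> (i = Suc j \<or> j = Suc i))"

definition longest_induced_path :: "'v set \<Rightarrow> ('v \<Rightarrow> 'v \<Rightarrow> bool) \<Rightarrow> nat" where
  "longest_induced_path V E = Max {length p - 1 | p. induced_path V E p}"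

definition Jset :: "nat \<Rightarrow> real set" where
  "Jset j = (if j = 0 then {0} else {real j - 1 .. real j})"

text \<open>Conditions (ii)-(iv) on I_1..I_r (condition (i) is built into Jset).\<close>
definition cond_ii :: "nat \<Rightarrow> real set \<Rightarrow> bool" where
  "cond_ii L A \<longleftrightarrow> (\<exists>t::nat. \<exists>a::nat \<Rightarrow> nat. \<exists>b::nat \<Rightarrow> real. t \<ge> 1 \<and>
      A = (\<Union>k\<in>{1..t}. {real (a k) .. b k}) \<and>
      (\<forall>k\<in>{1..t}. real (a k) < b k) \<and>
      (\<forall>k\<in>{1..<t}. b k < real (a (Suc k)) \<and> real (a (Suc k)) - b k > 2) \<and>
      b t < real L)"

definition cond_iii :: "nat \<Rightarrow> (nat \<Rightarrow> real set) \<Rightarrow> bool" where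
  "cond_iii r I \<longleftrightarrow> (\<forall>T. T \<subseteq> {1..r} \<longrightarrow>
      (\<forall>p\<in>T. \<forall>q\<in>T. I p \<inter> I q \<noteq> {}) \<longrightarrow> (\<Inter>k\<in>T. I k) \<noteq> {})"

definition cond_iv :: "nat \<Rightarrow> (nat \<Rightarrow> real set) \<Rightarrow> bool" where
  "cond_iv r I \<longleftrightarrow> (\<forall>p\<in>{1..r}. \<forall>q\<in>{1..r}. \<forall>j::nat.
      I p \<inter> I q \<noteq> {} \<and> real j \<in> I p \<and> real j \<notin> I q \<longrightarrow>
        (real j + 1 \<notin> I p \<longrightarrow> real j + 1 \<notin> I q) \<and>
        (real j - 1 \<notin> I p \<longrightarrow> real j - 1 \<notin> I q))"

text \<open>Vertices: Inl j is J_j (0 \<le> j \<le> L), Inr i is I_i (1 \<le> i \<le> r).\<close>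
definition CL_vertices :: "nat \<Rightarrow> nat \<Rightarrow> (nat + nat) set" where
  "CL_vertices L r = Inl ` {0..L} \<union> Inr ` {1..r}"

definition CL_sets :: "(nat \<Rightarrow> real set) \<Rightarrow> nat + nat \<Rightarrow> real set" where
  "CL_sets I = case_sum Jset I"

definition Fclique :: "nat \<Rightarrow> (nat \<Rightarrow> real set) \<Rightarrow> nat \<Rightarrow> (nat + nat) set" where
  "Fclique r I j = {Inl j, Inl (Suc j)} \<union> Inr ` {i \<in> {1..r}. real j \<in> I i}"

end

theory Submission
  imports Defs
begin

lemma gap:
  fixes a :: "nat \<Rightarrow> nat" and b :: "nat \<Rightarrow> real"
  assumes "\<forall>k\<in>{1..t}. real (a k) < b k"
    "\<forall>k\<in>{1..<t}. b k < real (a (Suc k)) \<and> real (a (Suc k)) - b k > 2"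
    "1 \<le> k1" "k1 < k2" "k2 \<le> t"
  shows "b k1 + 2 < real (a k2)"
  using assms(4,5)
proof (induction k2)
  case 0 then show ?case by simp
next
  case (Suc n)
  show ?case
  proof (cases "k1 = n")
    case True
    then have "n \<in> {1..<t}" using assms(3) Suc.prems by auto
    then have "b n < real (a (Suc n)) \<and> real (a (Suc n)) - b n > 2" using assms(2) by blast
    then show ?thesis unfolding True by linarith
  next
    case False
    then have "b k1 + 2 < real (a n)" using Suc by auto
    moreover have "real (a n) < b n" using assms(1,3) Suc.prems False by auto
    moreover have "b n < real (a (Suc n))" using assms(2,3) Suc.prems False by auto
    ultimately show ?thesis by linarith
  qed
qed

lemma cond_ii_props:
  assumes "cond_ii L A"
  shows "A \<noteq> {}"
    and "x \<in> A \<Longrightarrow> 0 \<le> x \<and> x < real L \<and> real (nat \<lfloor>x\<rfloor>) \<in> A"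
    and "y \<in> A \<Longrightarrow> y' \<in> A \<Longrightarrow> y \<le> y' \<Longrightarrow> y' - y \<le> 2 \<Longrightarrow> {y..y'} \<subseteq> A"
proof -
  obtain t a b where t: "t \<ge> 1" and A: "A = (\<Union>k\<in>{1..t}. {real (a k) .. b k})"
    and ab: "\<forall>k\<in>{1..t}. real (a k) < b k"
    and g: "\<forall>k\<in>{1..<t}. b k < real (a (Suc k)) \<and> real (a (Suc k)) - b k > 2"
    and bt: "b t < real L"
    using assms unfolding cond_ii_def by blast
  have "real (a 1) < b 1" using ab t by auto
  then have "real (a 1) \<in> {real (a 1) .. b 1}" by auto
  moreover have "{real (a 1) .. b 1} \<subseteq> A" using A t by auto
  ultimately show "A \<noteq> {}" by blast
  show "0 \<le> x \<and> x < real L \<and> real (nat \<lfloor>x\<rfloor>) \<in> A" if x: "x \<in> A"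
  proof -
    obtain k where k: "k \<in> {1..t}" "real (a k) \<le> x" "x \<le> b k" using x A by auto
    have "b k \<le> b t"
    proof (cases "k = t")
      case False
      then have "b k + 2 < real (a t)" using gap[OF ab g, of k t] k by auto
      then show ?thesis using ab t by force
    qed simp
    then have "x < real L" using k bt by linarith
    moreover have "0 \<le> x" using k by linarith
    moreover have "int (a k) \<le> \<lfloor>x\<rfloor>" using k by (simp add: le_floor_iff)
    moreover have "real_of_int \<lfloor>x\<rfloor> \<le> x" by simp
    ultimately have "real (a k) \<le> real (nat \<lfloor>x\<rfloor>)" "real (nat \<lfloor>x\<rfloor>) \<le> b k"
      using k by linarith+
    then show ?thesis using k A \<open>x < real L\<close> \<open>0 \<le> x\<close> by auto
  qed
  show "{y..y'} \<subseteq> A" if y: "y \<in> A" "y' \<in> A" "y \<le> y'" "y' - y \<le> 2"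
  proof -
    obtain k1 where k1: "k1 \<in> {1..t}" "real (a k1) \<le> y" "y \<le> b k1" using y A by auto
    obtain k2 where k2: "k2 \<in> {1..t}" "real (a k2) \<le> y'" "y' \<le> b k2" using y A by auto
    have "k1 = k2"
    proof (rule ccontr)
      assume ne: "k1 \<noteq> k2"
      show False
      proof (cases "k1 < k2")
        case True
        then have "b k1 + 2 < real (a k2)" using gap[OF ab g, of k1 k2] k1 k2 by auto
        then show False using k1 k2 y by linarith
      next
        case False
        then have "b k2 + 2 < real (a k1)" using ne gap[OF ab g, of k2 k1] k1 k2 by auto
        then show False using k1 k2 y by linarith
      qed
    qed
    then show ?thesis using k1 k2 A by auto
  qed
qed

lemma Jset_meet: "Jset i \<inter> Jset j \<noteq> {} \<longleftrightarrow> (i = j \<or> i = Suc j \<or> j = Suc i)"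
proof (cases i)
  case 0
  then show ?thesis by (cases j) (auto simp: Jset_def)
next
  case (Suc i0)
  show ?thesis
  proof (cases j)
    case 0
    then show ?thesis using Suc by (auto simp: Jset_def)
  next
    case (Suc j0)
    have "Jset i \<inter> Jset j = {max (real i) (real j) - 1 .. min (real i) (real j)}"
      using Suc \<open>i = Suc i0\<close> by (auto simp: Jset_def)
    then show ?thesis using Suc \<open>i = Suc i0\<close> by (auto simp: max_def min_def)
  qed
qed

lemma Jset_meet_aux: "Jset (Suc m) = {real m .. real m + 1}" by (simp add: Jset_def)

lemma adj_simps:
  "ig_adj (CL_sets I) (Inl i) (Inl j) \<longleftrightarrow> i \<noteq> j \<and> Jset i \<inter> Jset j \<noteq> {}"
  "ig_adj (CL_sets I) (Inl j) (Inr i) \<longleftrightarrow> Jset j \<inter> I i \<noteq> {}"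
  "ig_adj (CL_sets I) (Inr i) (Inl j) \<longleftrightarrow> I i \<inter> Jset j \<noteq> {}"
  "ig_adj (CL_sets I) (Inr i) (Inr j) \<longleftrightarrow> i \<noteq> j \<and> I i \<inter> I j \<noteq> {}"
  by (auto simp: ig_adj_def CL_sets_def)

lemma clique_cover:
  assumes L1: "L \<ge> 1" and ii: "\<forall>i\<in>{1..r}. cond_ii L (I i)"
    and iii: "cond_iii r I" and iv: "cond_iv r I"
    and C: "is_clique (CL_vertices L r) (ig_adj (CL_sets I)) C"
  shows "\<exists>j<L. C \<subseteq> Fclique r I j"
proof -
  have sub: "C \<subseteq> CL_vertices L r" using C by (simp add: is_clique_def)
  have adj: "\<And>u v. u \<in> C \<Longrightarrow> v \<in> C \<Longrightarrow> u \<noteq> v \<Longrightarrow> ig_adj (CL_sets I) u v"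
    using C by (simp add: is_clique_def)
  define T where "T = {i. Inr i \<in> C}"
  have T: "T \<subseteq> {1..r}" using sub by (auto simp: T_def CL_vertices_def)
  show ?thesis
  proof (cases "\<exists>k. Inl k \<in> C")
    case False
    have Cdesc: "C = Inr ` T"
    proof
      show "C \<subseteq> Inr ` T"
      proof
        fix v assume "v \<in> C" then show "v \<in> Inr ` T" using False by (cases v) (auto simp: T_def)
      qed
    qed (auto simp: T_def)
    show ?thesis
    proof (cases "T = {}")
      case True then show ?thesis using L1 Cdesc by (intro exI[of _ 0]) auto
    next
      case Tne: False
      have pw: "\<forall>p\<in>T. \<forall>q\<in>T. I p \<inter> I q \<noteq> {}"
      proof (intro ballI)
        fix p q assume pq: "p \<in> T" "q \<in> T"
        show "I p \<inter> I q \<noteq> {}"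
        proof (cases "p = q")
          case True then show ?thesis using cond_ii_props(1) ii T pq by auto
        next
          case False
          then have "ig_adj (CL_sets I) (Inr p) (Inr q)" using adj pq by (auto simp: T_def)
          then show ?thesis by (simp add: adj_simps)
        qed
      qed
      have "T \<subseteq> {1..r} \<longrightarrow> (\<forall>p\<in>T. \<forall>q\<in>T. I p \<inter> I q \<noteq> {}) \<longrightarrow> (\<Inter>k\<in>T. I k) \<noteq> {}"
        using iii unfolding cond_iii_def by (rule spec)
      then have "(\<Inter>k\<in>T. I k) \<noteq> {}" using T pw by blast
      then obtain x where x: "x \<in> (\<Inter>k\<in>T. I k)" by (metis ex_in_conv)
      obtain i0 where i0: "i0 \<in> T" using Tne by auto
      have xp: "0 \<le> x \<and> x < real L" using cond_ii_props(2)[of L "I i0" x] ii T i0 x by auto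
      define j where "j = nat \<lfloor>x\<rfloor>"
      have jin: "\<forall>i\<in>T. real j \<in> I i" using cond_ii_props(2) ii T x unfolding j_def by blast
      have "real j \<le> x" using xp unfolding j_def by linarith
      then have "j < L" using xp by linarith
      moreover have "C \<subseteq> Fclique r I j" using Cdesc jin T by (auto simp: Fclique_def)
      ultimately show ?thesis by blast
    qed
  next
    case True
    then obtain k where k: "Inl k \<in> C" by blast
    have kL: "k \<le> L" using k sub by (auto simp: CL_vertices_def)
    have two: "\<exists>j<L. C \<subseteq> Fclique r I j" if m: "Inl m \<in> C" "Inl (Suc m) \<in> C" for m
    proof -
      have "Suc m \<le> L" using m sub by (auto simp: CL_vertices_def)
      then have mL: "m < L" by simp
      have "C \<subseteq> Fclique r I m"
      proof
        fix v assume v: "v \<in> C"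
        show "v \<in> Fclique r I m"
        proof (cases v)
          case (Inl n)
          show ?thesis
          proof (rule ccontr)
            assume nn: "v \<notin> Fclique r I m"
            then have "n \<noteq> m" "n \<noteq> Suc m" using Inl by (auto simp: Fclique_def)
            then have "ig_adj (CL_sets I) (Inl n) (Inl m)" "ig_adj (CL_sets I) (Inl n) (Inl (Suc m))"
              using adj v m Inl by auto
            then show False using \<open>n \<noteq> m\<close> \<open>n \<noteq> Suc m\<close> by (auto simp: adj_simps Jset_meet)
          qed
        next
          case (Inr i)
          have iT: "i \<in> {1..r}" using T v Inr by (auto simp: T_def)
          have a1: "I i \<inter> Jset m \<noteq> {}" "I i \<inter> Jset (Suc m) \<noteq> {}"
            using adj[OF v m(1)] adj[OF v m(2)] Inr by (auto simp: adj_simps)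
          have "real m \<in> I i"
          proof (cases m)
            case 0 then show ?thesis using a1 by (auto simp: Jset_def)
          next
            case (Suc m0)
            obtain y where y: "y \<in> I i" "real m - 1 \<le> y" "y \<le> real m"
              using a1(1) Suc by (auto simp: Jset_def)
            obtain y' where y': "y' \<in> I i" "real m \<le> y'" "y' \<le> real m + 1"
              using a1(2) unfolding Jset_meet_aux by auto
            have "{y..y'} \<subseteq> I i" using cond_ii_props(3)[of L "I i" y y'] ii iT y y' by auto
            then show ?thesis using y y' by auto
          qed
          then show ?thesis using Inr iT by (auto simp: Fclique_def)
        qed
      qed
      then show ?thesis using mL by blast
    qed
    show ?thesis
    proof (cases "\<exists>k'. k' \<noteq> k \<and> Inl k' \<in> C")
      case True
      then obtain k' where k': "k' \<noteq> k" "Inl k' \<in> C" by blast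
      have "ig_adj (CL_sets I) (Inl k) (Inl k')" using adj k k' by auto
      then have "k' = Suc k \<or> k = Suc k'" using k' by (auto simp: adj_simps Jset_meet)
      then show ?thesis using two k k' by blast
    next
      case False
      have Cdesc: "C = insert (Inl k) (Inr ` T)"
      proof
        show "C \<subseteq> insert (Inl k) (Inr ` T)"
        proof
          fix v assume "v \<in> C" then show "v \<in> insert (Inl k) (Inr ` T)"
            using False by (cases v) (auto simp: T_def)
        qed
      qed (auto simp: T_def k)
      have meet: "I i \<inter> Jset k \<noteq> {}" if "i \<in> T" for i
        using adj[of "Inr i" "Inl k"] that k by (auto simp: T_def adj_simps)
      show ?thesis
      proof (cases k)
        case 0
        have "\<forall>i\<in>T. real 0 \<in> I i" using meet 0 by (auto simp: Jset_def)
        then have "C \<subseteq> Fclique r I 0" using Cdesc T 0 by (auto simp: Fclique_def)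
        then show ?thesis using L1 by (intro exI[of _ 0]) auto
      next
        case (Suc k0)
        have either: "real k0 \<in> I i \<or> real k \<in> I i" if iT: "i \<in> T" for i
        proof -
          obtain y where y: "y \<in> I i" "real k0 \<le> y" "y \<le> real k"
            using meet[OF iT] Suc by (auto simp: Jset_def)
          show ?thesis
          proof (cases "y = real k")
            case True then show ?thesis using y by auto
          next
            case False
            have "int k0 \<le> \<lfloor>y\<rfloor>" using y by (simp add: le_floor_iff)
            moreover have "\<lfloor>y\<rfloor> < int k" using y False by (simp add: floor_less_iff)
            ultimately have "nat \<lfloor>y\<rfloor> = k0" using Suc by linarith
            then show ?thesis using cond_ii_props(2)[of L "I i" y] ii T iT y by auto
          qed
        qed
        show ?thesis
        proof (cases "\<forall>i\<in>T. real k0 \<in> I i")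
          case True
          have "C \<subseteq> Fclique r I k0" using Cdesc T True Suc by (auto simp: Fclique_def)
          moreover have "k0 < L" using kL Suc by simp
          ultimately show ?thesis by blast
        next
          case False
          then obtain i0 where i0: "i0 \<in> T" "real k0 \<notin> I i0" by blast
          then have ki0: "real k \<in> I i0" using either by blast
          have "cond_ii L (I i0)" using ii T i0 by auto
          then have "real k < real L" using cond_ii_props(2)[of L "I i0" "real k"] ki0 by blast
          then have kL': "k < L" by simp
          have all: "\<forall>i\<in>T. real k \<in> I i"
          proof (rule ccontr)
            assume "\<not> (\<forall>i\<in>T. real k \<in> I i)"
            then obtain i1 where i1: "i1 \<in> T" "real k \<notin> I i1" by blast
            then have "real k0 \<in> I i1" using either by blast
            have "i1 \<noteq> i0" using i1 ki0 by auto
            then have "I i1 \<inter> I i0 \<noteq> {}"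
              using adj[of "Inr i1" "Inr i0"] i1 i0 by (auto simp: T_def adj_simps)
            then have "real k0 + 1 \<notin> I i1 \<longrightarrow> real k0 + 1 \<notin> I i0"
              using iv i1 i0 T \<open>real k0 \<in> I i1\<close> unfolding cond_iv_def by blast
            then show False using i1 ki0 Suc by (auto simp: add.commute)
          qed
          have "C \<subseteq> Fclique r I k" using Cdesc T all by (auto simp: Fclique_def)
          then show ?thesis using kL' by blast
        qed
      qed
    qed
  qed
qed

theorem mainTheorem4:
  fixes L r :: nat and I :: "nat \<Rightarrow> real set"
  assumes "L \<ge> 1"
    and "\<forall>i\<in>{1..r}. cond_ii L (I i)"
    and "cond_iii r I"
    and "cond_iv r I"
  shows "maximal_cliques (CL_vertices L r) (ig_adj (CL_sets I)) = Fclique r I ` {0..<L}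
       \<and> num_max_cliques (CL_vertices L r) (ig_adj (CL_sets I)) = L
       \<and> longest_induced_path (CL_vertices L r) (ig_adj (CL_sets I)) = L
       \<and> induced_path (CL_vertices L r) (ig_adj (CL_sets I)) (map Inl [0..<Suc L])"
proof -
  define V where "V = CL_vertices L r"
  define E where "E = ig_adj (CL_sets I)"
  define F where "F = Fclique r I"
  have cover: "\<And>C. is_clique V E C \<Longrightarrow> \<exists>j<L. C \<subseteq> F j"
    using clique_cover[OF assms] unfolding V_def E_def F_def by blast
  have Finl: "\<And>m j. Inl m \<in> F j \<longleftrightarrow> m = j \<or> m = Suc j"
    by (auto simp: F_def Fclique_def)
  have Fcl: "is_clique V E (F j)" if j: "j < L" for j
    unfolding is_clique_def
  proof (intro conjI ballI impI)
    show "F j \<subseteq> V" using j by (auto simp: F_def Fclique_def V_def CL_vertices_def)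
  next
    fix u v assume u: "u \<in> F j" and v: "v \<in> F j" and uv: "u \<noteq> v"
    have jJ: "real j \<in> Jset j" "real j \<in> Jset (Suc j)" by (auto simp: Jset_def)
    show "E u v"
    proof (cases u)
      case (Inl a)
      show ?thesis
      proof (cases v)
        case (Inl b)
        then show ?thesis using \<open>u = Inl a\<close> u v uv Finl
          by (auto simp: E_def adj_simps Jset_meet)
      next
        case (Inr b)
        then have "real j \<in> I b" using v by (auto simp: F_def Fclique_def)
        then show ?thesis using \<open>u = Inl a\<close> Inr u Finl jJ by (auto simp: E_def adj_simps)
      qed
    next
      case (Inr a)
      then have ja: "real j \<in> I a" using u by (auto simp: F_def Fclique_def)
      show ?thesis
      proof (cases v)
        case (Inl b)
        then show ?thesis using Inr ja v Finl jJ by (auto simp: E_def adj_simps)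
      next
        case (Inr b)
        then have "real j \<in> I b" using v by (auto simp: F_def Fclique_def)
        then show ?thesis using \<open>u = Inr a\<close> Inr ja uv by (auto simp: E_def adj_simps)
      qed
    qed
  qed
  have Finj: "j = j'" if "F j \<subseteq> F j'" for j j'
    using that Finl[of j j] Finl[of "Suc j" j] Finl[of j j'] Finl[of "Suc j" j'] by auto
  have maxF: "is_maximal_clique V E (F j)" if j: "j < L" for j
    unfolding is_maximal_clique_def
  proof (intro conjI allI impI)
    show "is_clique V E (F j)" using Fcl j .
  next
    fix D assume D: "is_clique V E D \<and> F j \<subseteq> D"
    then obtain j' where j': "j' < L" "D \<subseteq> F j'" using cover by blast
    then have "j = j'" using D Finj by blast
    then show "D = F j" using D j' by auto
  qed
  have MC: "maximal_cliques V E = F ` {0..<L}"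
  proof
    show "maximal_cliques V E \<subseteq> F ` {0..<L}"
    proof
      fix C assume "C \<in> maximal_cliques V E"
      then have C: "is_maximal_clique V E C" by (simp add: maximal_cliques_def)
      then have "is_clique V E C" by (simp add: is_maximal_clique_def)
      then obtain j where j: "j < L" "C \<subseteq> F j" using cover by blast
      then have "F j = C" using C Fcl by (auto simp: is_maximal_clique_def)
      then show "C \<in> F ` {0..<L}" using j by auto
    qed
  next
    show "F ` {0..<L} \<subseteq> maximal_cliques V E" using maxF by (auto simp: maximal_cliques_def)
  qed
  have injF: "inj_on F {0..<L}" by (rule inj_onI) (use Finj in blast)
  have card: "num_max_cliques V E = L"
    unfolding num_max_cliques_def MC using card_image[OF injF] by simp
  define P :: "(nat + nat) list" where "P = map Inl [0..<Suc L]"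
  have Pnth: "\<And>i. i < Suc L \<Longrightarrow> P ! i = Inl i" by (simp add: P_def del: upt_Suc)
  have ipP: "induced_path V E P"
    unfolding induced_path_def
  proof (intro conjI allI impI)
    show "P \<noteq> []" by (simp add: P_def)
    show "distinct P" by (simp add: P_def distinct_map del: upt_Suc)
    show "set P \<subseteq> V" by (auto simp: P_def V_def CL_vertices_def)
  next
    fix i j assume "i < length P" "j < length P"
    then have "i < Suc L" "j < Suc L" by (simp_all add: P_def del: upt_Suc)
    then show "E (P ! i) (P ! j) = (i = Suc j \<or> j = Suc i)"
      using Pnth by (auto simp: E_def adj_simps Jset_meet)
  qed
  have bound: "length p - 1 \<le> L" if p: "induced_path V E p" for p
  proof -
    define n where "n = length p - 1"
    have pV: "set p \<subseteq> V" and dp: "distinct p"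
      and pE: "\<And>i j. i < length p \<Longrightarrow> j < length p \<Longrightarrow> E (p!i) (p!j) \<longleftrightarrow> (i = Suc j \<or> j = Suc i)"
      using p by (auto simp: induced_path_def)
    have ex: "\<exists>j<L. {p!i, p!Suc i} \<subseteq> F j" if i: "i < n" for i
    proof -
      have "is_clique V E {p!i, p!Suc i}"
        unfolding is_clique_def using i pV pE[of i "Suc i"] pE[of "Suc i" i] by (auto simp: n_def)
      then show ?thesis using cover by blast
    qed
    define f where "f i = (SOME j. j < L \<and> {p!i, p!Suc i} \<subseteq> F j)" for i
    have f: "f i < L \<and> {p!i, p!Suc i} \<subseteq> F (f i)" if "i < n" for i
      unfolding f_def using someI_ex[OF ex[OF that]] .
    have ne: "f i \<noteq> f i'" if ii: "i < i'" "i' < n" for i i'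
    proof
      assume eq: "f i = f i'"
      have "p!i \<in> F (f i)" "p!Suc i' \<in> F (f i)" using f[of i] f[of i'] ii eq by auto
      moreover have "p!i \<noteq> p!Suc i'" using dp ii by (simp add: n_def nth_eq_iff_index_eq)
      ultimately have "E (p!i) (p!Suc i')" using Fcl[of "f i"] f[of i] ii
        unfolding is_clique_def by auto
      moreover have "i < length p" "Suc i' < length p" using ii by (auto simp: n_def)
      ultimately show False using pE[of i "Suc i'"] ii by auto
    qed
    have "inj_on f {0..<n}"
      by (rule inj_onI) (metis atLeastLessThan_iff linorder_neq_iff ne)
    moreover have "f ` {0..<n} \<subseteq> {0..<L}" using f by auto
    ultimately have "card {0..<n} \<le> card {0..<L}" by (intro card_inj_on_le) auto
    then show ?thesis by (simp add: n_def)
  qed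
  have lip: "longest_induced_path V E = L"
    unfolding longest_induced_path_def
  proof (rule Max_eqI)
    show "finite {length p - 1 |p. induced_path V E p}"
      by (rule finite_subset[of _ "{0..L}"]) (auto dest: bound)
    show "\<And>y. y \<in> {length p - 1 |p. induced_path V E p} \<Longrightarrow> y \<le> L" using bound by auto
    show "L \<in> {length p - 1 |p. induced_path V E p}"
      using ipP by (intro CollectI exI[of _ P]) (simp add: P_def del: upt_Suc)
  qed
  show ?thesis using MC card lip ipP unfolding V_def E_def F_def P_def by simp
qed

end
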